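(* Let $s\in(0,1)$, let $\Omega\subset\mathbb R^2$ be a Jordan domain with $s$-hyperbolic growth, and let $g:\mathbb D\to\Omega$ be a conformal map. Then there is a constant $C<\infty$ such that for all $x\in\mathbb D$ with $|x|\ge 1/2$, $$d(g(x),\partial\Omega)\le C\log^{\frac{1}{s-1}}\Big(\frac{1}{1-|x|}\Big)\quad\text{and}\quad |g'(x)|\le \frac{C}{1-|x|}\log^{\frac{1}{s-1}}\Big(\frac{1}{1-|x|}\Big).$$
   Context: $\mathbb D$ is the open unit disk in $\mathbb C$. For a domain $\Omega\subset\mathbb R^2$, $d(z,\partial\Omega)$ denotes the Euclidean distance from $z$ to $\partial\Omega$, and the quasihyperbolic metric is $h_\Omega(z_1,z_2)=\inf_\gamma\int_\gamma \frac{|dz|}{d(z,\partial\Omega)}$, the infimum over all rectifiable arcs $\gamma\subset\Omega$ joining $z_1$ to $z_2$. For $s\in(0,1)$, a planar domain $\Omega$ has $s$-hyperbolic growth if there is a point $z_0\in\Omega$ such that $h_\Omega(z_0,z)\le \left(\frac{d(z_0,\partial\Omega)}{d(z,\partial\Omega)}\right)^{1-s}$ for all $z\in\Omega$. *)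

theory Defs
  imports "HOL-Complex_Analysis.Complex_Analysis"
begin

definition bdist :: "complex set \<Rightarrow> complex \<Rightarrow> real" where
  "bdist \<Omega> z = infdist z (frontier \<Omega>)"

text \<open>Quasihyperbolic metric: infimum over (piecewise C1, hence rectifiable) arcs in Omega
  joining z1 to z2 of the arclength integral of 1 / d(z, boundary Omega).\<close>
definition qh_dist :: "complex set \<Rightarrow> complex \<Rightarrow> complex \<Rightarrow> real" where
  "qh_dist \<Omega> z1 z2 =
     Inf {integral {0..1} (\<lambda>t. norm (vector_derivative \<gamma> (at t)) / bdist \<Omega> (\<gamma> t)) | \<gamma>.
            valid_path \<gamma> \<and> arc \<gamma> \<and> path_image \<gamma> \<subseteq> \<Omega> \<and>
            pathstart \<gamma> = z1 \<and> pathfinish \<gamma> = z2 \<and>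
            (\<lambda>t. norm (vector_derivative \<gamma> (at t)) / bdist \<Omega> (\<gamma> t)) integrable_on {0..1}}"

definition jordan_domain :: "complex set \<Rightarrow> bool" where
  "jordan_domain \<Omega> \<longleftrightarrow>
     (\<exists>c. simple_path c \<and> pathfinish c = pathstart c \<and> \<Omega> = inside (path_image c))"

definition hyperbolic_growth :: "real \<Rightarrow> complex set \<Rightarrow> bool" where
  "hyperbolic_growth s \<Omega> \<longleftrightarrow>
     (\<exists>z0\<in>\<Omega>. \<forall>z\<in>\<Omega>. qh_dist \<Omega> z0 z \<le> (bdist \<Omega> z0 / bdist \<Omega> z) powr (1 - s))"

end

theory Submission imports Defs begin

lemma bdist_facts:
  assumes "open \<Omega>" "bounded \<Omega>" "w \<in> \<Omega>"
  shows "0 < bdist \<Omega> w" "ball w (bdist \<Omega> w) \<subseteq> \<Omega>"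
    "\<exists>p. p \<notin> \<Omega> \<and> dist w p = bdist \<Omega> w"
proof -
  have ne: "frontier \<Omega> \<noteq> {}"
  proof -
    have "\<Omega> \<noteq> UNIV" using assms(2) not_bounded_UNIV by blast
    then show ?thesis using connected_Int_frontier[of UNIV \<Omega>] assms(3) by auto
  qed
  have wf: "w \<notin> frontier \<Omega>" using assms(1,3) by (simp add: frontier_def interior_open)
  show "0 < bdist \<Omega> w" unfolding bdist_def
    using infdist_pos_not_in_closed[OF frontier_closed ne wf] by auto
  show "ball w (bdist \<Omega> w) \<subseteq> \<Omega>"
  proof (rule ccontr)
    assume "\<not> ?thesis"
    then have "ball w (bdist \<Omega> w) \<inter> frontier \<Omega> \<noteq> {}"
      using connected_Int_frontier[of "ball w (bdist \<Omega> w)" \<Omega>] assms(3)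
      by (metis Diff_eq_empty_iff centre_in_ball connected_ball disjoint_iff \<open>0 < bdist \<Omega> w\<close>)
    then obtain y where "y \<in> frontier \<Omega>" "dist w y < bdist \<Omega> w" by auto
    then show False using infdist_le[of y "frontier \<Omega>" w] unfolding bdist_def by auto
  qed
  obtain p where "p \<in> frontier \<Omega>" "infdist w (frontier \<Omega>) = dist w p"
    using infdist_attains_inf[OF frontier_closed ne] by blast
  moreover have "p \<notin> \<Omega>" using \<open>p \<in> frontier \<Omega>\<close> assms(1) by (simp add: frontier_def interior_open)
  ultimately show "\<exists>p. p \<notin> \<Omega> \<and> dist w p = bdist \<Omega> w" unfolding bdist_def by auto
qed

lemma cnj_mult_self: "cnj z * z = of_real (norm z ^ 2)"
  by (metis complex_norm_square mult.commute complex_mult_cnj)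

lemma schwarz_pick_bound:
  assumes holh: "h holomorphic_on ball w r" and r: "0 < r"
    and lt1: "\<And>u. u \<in> ball w r \<Longrightarrow> norm (h u) < 1"
  shows "norm (deriv h w) \<le> 2 * (1 - norm (h w) ^ 2) / r"
proof -
  define z where "z = h w"
  have z1: "norm z < 1" using lt1 r z_def by auto
  have nz: "1 - cnj z * h u \<noteq> 0" if "u \<in> ball w r" for u
  proof
    assume "1 - cnj z * h u = 0"
    then have "norm (cnj z * h u) = 1" by (metis eq_iff_diff_eq_0 norm_one)
    moreover have "norm (cnj z * h u) < 1"
      using lt1[OF that] z1 by (simp add: norm_mult) (metis mult_le_one norm_ge_zero less_le_not_le le_less mult_strict_mono' less_one mult_1 zero_le_one)
    ultimately show False by simp
  qed
  define M where "M u = (h u - z) / (1 - cnj z * h u)" for u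
  have holM: "M holomorphic_on ball w r"
    unfolding M_def by (intro holomorphic_intros holh nz)
  have M1: "norm (M u) < 1" if "u \<in> ball w r" for u
    using Moebius_function_norm_lt_1[OF z1 lt1[OF that], of 0]
    by (simp add: Moebius_function_simple M_def)
  have "norm ((deriv ^^ 1) M w) \<le> fact 1 * 1 / (r/2) ^ 1"
  proof (rule Cauchy_inequality)
    show "M holomorphic_on ball w (r / 2)" using holM by (rule holomorphic_on_subset) (simp add: subset_ball r)
    show "continuous_on (cball w (r / 2)) M"
      using holomorphic_on_imp_continuous_on[OF holM] by (rule continuous_on_subset) (simp add: cball_subset_ball_iff r)
    show "0 < r/2" using r by simp
    show "norm (M x) \<le> 1" if "norm (w - x) = r / 2" for x
      using M1[of x] that r by (simp add: dist_norm less_imp_le)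
  qed
  then have Mb: "norm (deriv M w) \<le> 2 / r" by simp
  define h' where "h' = deriv h w"
  have dh: "(h has_field_derivative h') (at w)"
    unfolding h'_def using holh r by (simp add: holomorphic_derivI)
  have "(M has_field_derivative ((h' * (1 - cnj z * h w) - (h w - z) * (- (cnj z * h'))) / (1 - cnj z * h w)^2)) (at w)"
    unfolding M_def
    by (rule derivative_eq_intros dh refl)+ (use nz r in \<open>auto simp: power2_eq_square mult.commute\<close>)
  then have "deriv M w = h' / (1 - cnj z * z)"
    using DERIV_imp_deriv nz[of w] r z_def by (simp add: power2_eq_square) 
  then have "deriv M w = h' / of_real (1 - norm z ^ 2)" by (simp add: cnj_mult_self)
  moreover have t0: "0 < 1 - norm z ^ 2" using z1 by (simp add: abs_square_less_1)
  moreover have "1 - (complex_of_real (norm z))^2 \<noteq> 0"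
  proof
    assume "1 - (complex_of_real (norm z))^2 = 0"
    then have "complex_of_real (1 - norm z ^ 2) = 0" by simp
    then show False using t0 by (simp only: of_real_eq_0_iff)
  qed
  ultimately have "h' = deriv M w * of_real (1 - norm z ^ 2)" by (simp add: field_simps)
  then have "norm h' = norm (deriv M w) * (1 - norm z ^ 2)"
    using t0 by (simp only: norm_mult norm_of_real)
  also have "\<dots> \<le> 2 / r * (1 - norm z ^ 2)"
    using Mb z1 by (intro mult_right_mono) (auto simp: abs_square_less_1 power_le_one)
  finally show ?thesis by (simp add: h'_def z_def)
qed

lemma deriv_bound_bdist:
  assumes holg: "g holomorphic_on ball 0 1" and inj: "inj_on g (ball 0 1)"
    and Om: "\<Omega> = g ` ball 0 1" and bnd: "bounded \<Omega>" and x: "norm x < 1"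
  shows "norm (deriv g x) \<le> 48 * bdist \<Omega> (g x) / (1 - norm x)"
proof -
  have opn: "open \<Omega>" using Om open_mapping_thm3[OF holg _ inj] by simp
  define w where "w = g x"
  have wO: "w \<in> \<Omega>" using Om x w_def by auto
  define d where "d = bdist \<Omega> w"
  have d0: "0 < d" and ballO: "ball w d \<subseteq> \<Omega>" using bdist_facts[OF opn bnd wO] d_def by auto
  obtain p where pO: "p \<notin> \<Omega>" and dp: "dist w p = d" using bdist_facts[OF opn bnd wO] d_def by auto
  have gp: "g z - p \<noteq> 0" if "z \<in> ball 0 1" for z using pO Om that by auto
  obtain F where holF: "F holomorphic_on ball 0 1" and F2: "\<And>z. z \<in> ball 0 1 \<Longrightarrow> g z - p = F z ^ 2"
    using contractible_imp_holomorphic_sqrt[OF holomorphic_on_diff[OF holg holomorphic_on_const] 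
        convex_imp_contractible[OF convex_ball] gp] by blast
  have gF: "g z = F z ^ 2 + p" if "z \<in> ball 0 1" for z using F2[OF that] by (simp add: algebra_simps)
  have sqeq: "F z1 = F z2 \<or> F z1 = - F z2" if "F z1 ^ 2 = F z2 ^ 2" for z1 z2
  proof -
    have "(F z1 - F z2) * (F z1 + F z2) = 0" using that by (simp add: algebra_simps power2_eq_square)
    then show ?thesis by (auto simp: add_eq_0_iff)
  qed
  have disj: False if "z1 \<in> ball 0 1" "z2 \<in> ball 0 1" "F z1 = - F z2" for z1 z2
  proof -
    have "g z1 = g z2" using gF[OF that(1)] gF[OF that(2)] that(3) by simp
    then have "z1 = z2" using inj that(1,2) by (meson inj_onD)
    then have "F z1 = 0" using that(3) by simp
    then have "g z1 = p" using gF[OF that(1)] by simp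
    then show False using pO Om that(1) by auto
  qed
  have injF: "inj_on F (ball 0 1)"
  proof (rule inj_onI)
    fix z1 z2 assume "z1 \<in> ball 0 1" "z2 \<in> ball 0 1" "F z1 = F z2"
    then have "g z1 = g z2" using gF by simp
    then show "z1 = z2" using inj \<open>z1 \<in> ball 0 1\<close> \<open>z2 \<in> ball 0 1\<close> by (meson inj_onD)
  qed
  have opF: "open (F ` ball 0 1)" using open_mapping_thm3[OF holF _ injF] by simp
  define q where "q = F x"
  have xb: "x \<in> ball 0 1" using x by simp
  have nq: "norm q ^ 2 = d"
  proof -
    have "norm q ^ 2 = norm (g x - p)" using F2[OF xb] q_def by (simp add: norm_power)
    then show ?thesis using dp w_def by (simp add: dist_norm)
  qed
  have q0: "norm q > 0" using nq d0 by (metis norm_ge_zero order_le_less power_zero_numeral zero_less_numeral less_irrefl)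
  have cover: "ball q (norm q / 3) \<subseteq> F ` ball 0 1 \<union> (\<lambda>v. - v) ` F ` ball 0 1"
  proof
    fix u assume u: "u \<in> ball q (norm q / 3)"
    have uq: "norm (u - q) < norm q / 3" using u by (simp add: dist_norm norm_minus_commute)
    have "norm (u + q) \<le> norm (u - q) + 2 * norm q"
      using norm_triangle_ineq[of "u - q" "2 * q"] by (simp add: norm_mult add.commute)
    then have uq2: "norm (u + q) \<le> 7/3 * norm q" using uq by simp
    have "norm (q^2 - u^2) = norm (u - q) * norm (u + q)"
      by (simp add: power2_eq_square norm_mult[symmetric] algebra_simps norm_minus_commute)
    also have "\<dots> \<le> norm q / 3 * (7/3 * norm q)"
      using uq uq2 by (intro mult_mono) auto
    also have "\<dots> < norm q ^ 2" using q0 by (simp add: power2_eq_square)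
    finally have "norm (q^2 - u^2) < d" using nq by simp
    moreover have "q^2 = w - p" using F2[OF xb] q_def w_def by simp
    ultimately have "dist w (u^2 + p) < d" by (simp add: dist_norm algebra_simps)
    then have "u^2 + p \<in> \<Omega>" using ballO by auto
    then obtain z where z: "z \<in> ball 0 1" "g z = u^2 + p" using Om by auto
    then have "F z ^ 2 = u ^ 2" using gF by simp
    then have "F z = u \<or> F z = - u" 
    proof -
      have "(F z - u) * (F z + u) = 0" using \<open>F z ^ 2 = u ^ 2\<close> by (simp add: algebra_simps power2_eq_square)
      then show ?thesis by (auto simp: add_eq_0_iff)
    qed
    then show "u \<in> F ` ball 0 1 \<union> (\<lambda>v. - v) ` F ` ball 0 1"
      using z(1) by (metis UnI1 UnI2 image_eqI minus_minus)
  qed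
  have ballF: "ball q (norm q / 3) \<subseteq> F ` ball 0 1"
  proof -
    have "F ` ball 0 1 \<inter> ball q (norm q / 3) = {} \<or> (\<lambda>v. - v) ` F ` ball 0 1 \<inter> ball q (norm q / 3) = {}"
    proof (rule connectedD[OF connected_ball opF open_negations[OF opF] _ cover])
      show "F ` ball 0 1 \<inter> (\<lambda>v. - v) ` F ` ball 0 1 \<inter> ball q (norm q / 3) = {}"
        using disj by auto
    qed
    moreover have "q \<in> F ` ball 0 1 \<inter> ball q (norm q / 3)" using q_def xb q0 by auto
    ultimately show ?thesis using cover by blast
  qed
  have far: "norm (F z + q) \<ge> norm q / 3" if "z \<in> ball 0 1" for z
  proof (rule ccontr)
    assume "\<not> ?thesis"
    then have "- F z \<in> ball q (norm q / 3)" by (simp add: dist_norm add.commute)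
    then obtain z' where "z' \<in> ball 0 1" "- F z = F z'" using ballF by auto
    then show False using disj[OF that \<open>z' \<in> ball 0 1\<close>] by (metis minus_minus)
  qed
  have Fq0: "F z + q \<noteq> 0" if "z \<in> ball 0 1" for z using far[OF that] q0 by auto
  define c where "c = complex_of_real (norm q / 3)"
  define G where "G z = c / (F z + q)" for z
  have holG: "G holomorphic_on ball 0 1" unfolding G_def by (intro holomorphic_intros holF Fq0)
  have G1: "norm (G z) \<le> 1" if "z \<in> ball 0 1" for z
  proof -
    have "norm c = norm q / 3" by (simp add: c_def)
    then have "norm (G z) = (norm q/3) / norm (F z + q)" unfolding G_def by (simp only: norm_divide)
    moreover have "norm (F z + q) > 0" using Fq0[OF that] by simp
    ultimately show ?thesis using far[OF that] by (simp add: divide_le_eq_1)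
  qed
  define r where "r = (1 - norm x) / 2"
  have r0: "0 < r" using x r_def by simp
  have cb: "cball x r \<subseteq> ball 0 1"
  proof
    fix y assume "y \<in> cball x r"
    then have "norm y \<le> norm x + r" using norm_triangle_ineq[of x "y - x"] by (simp add: dist_norm norm_minus_commute)
    moreover have "norm x + r < 1" using r_def x by (simp add: field_simps)
    ultimately show "y \<in> ball 0 1" by simp
  qed
  have "norm ((deriv ^^ 1) G x) \<le> fact 1 * 1 / r ^ 1"
  proof (rule Cauchy_inequality)
    show "G holomorphic_on ball x r" using holG cb ball_subset_cball by (blast intro: holomorphic_on_subset)
    show "continuous_on (cball x r) G" using holomorphic_on_imp_continuous_on[OF holG] cb by (rule continuous_on_subset)
    show "norm (G y) \<le> 1" if "norm (x - y) = r" for y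
      using G1 cb that by (auto simp: dist_norm)
  qed (use r0 in auto)
  then have Gb: "norm (deriv G x) \<le> 2 / (1 - norm x)" by (simp add: r_def)
  define F' where "F' = deriv F x"
  have dF: "(F has_field_derivative F') (at x)" unfolding F'_def using holF xb by (simp add: holomorphic_derivI)
  have "(G has_field_derivative (- (c * F') / (F x + q)^2)) (at x)"
    unfolding G_def by (rule derivative_eq_intros dF refl)+ (use Fq0 xb in \<open>auto simp: power2_eq_square\<close>)
  then have dG: "deriv G x = - (c * F') / (F x + q)^2" by (rule DERIV_imp_deriv)
  have "((\<lambda>z. F z ^ 2 + p) has_field_derivative (of_nat 2 * F x ^ 1 * F')) (at x)"
    by (rule derivative_eq_intros dF refl)+ simp
  then have "((\<lambda>z. F z ^ 2 + p) has_field_derivative (2 * q * F')) (at x)" by (simp add: q_def)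
  then have "(g has_field_derivative (2 * q * F')) (at x)"
    by (rule has_field_derivative_transform_within_open[OF _ open_ball xb]) (use gF in auto)
  then have dg: "deriv g x = 2 * q * F'" by (rule DERIV_imp_deriv)
  have "norm (deriv G x) = norm q / 3 * norm F' / (4 * norm q ^ 2)"
    using q0 by (simp add: dG q_def[symmetric] c_def norm_divide norm_mult norm_power)
  then have e1: "norm F' = 12 * norm q * norm (deriv G x)"
    using q0 by (simp add: field_simps power2_eq_square)
  have "norm (deriv g x) = 2 * norm q * norm F'" by (simp add: dg norm_mult)
  also have "\<dots> = 24 * (norm q ^ 2) * norm (deriv G x)" unfolding e1 by (simp add: power2_eq_square)
  finally have "norm (deriv g x) = 24 * d * norm (deriv G x)" using nq by simp
  also have "\<dots> \<le> 24 * d * (2 / (1 - norm x))" using Gb d0 by (intro mult_left_mono) auto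
  also have "\<dots> = 48 * d / (1 - norm x)" by simp
  finally show ?thesis unfolding d_def w_def .
qed

lemma Re_mult_cnj: "Re (z * cnj z) = norm z ^ 2"
  by (simp only: complex_norm_square[symmetric] Re_complex_of_real)

lemma Re_cross_le: "Re (a * cnj b + b * cnj a) \<le> 2 * norm a * norm b"
proof -
  have "Re (a * cnj b + b * cnj a) \<le> norm (a * cnj b + b * cnj a)" by (rule complex_Re_le_cmod)
  also have "\<dots> \<le> norm (a * cnj b) + norm (b * cnj a)" by (rule norm_triangle_ineq)
  also have "\<dots> = 2 * norm a * norm b" by (simp add: norm_mult)
  finally show ?thesis .
qed

lemma path_bound:
  assumes holh: "h holomorphic_on \<Omega>" and opn: "open \<Omega>" and bnd: "bounded \<Omega>"
    and hD: "\<And>u. u \<in> \<Omega> \<Longrightarrow> norm (h u) < 1"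
    and vp: "valid_path \<gamma>" and pim: "path_image \<gamma> \<subseteq> \<Omega>"
    and intg: "(\<lambda>t. norm (vector_derivative \<gamma> (at t)) / bdist \<Omega> (\<gamma> t)) integrable_on {0..1}"
  shows "- ln (1 - norm (h (pathfinish \<gamma>)) ^ 2) + ln (1 - norm (h (pathstart \<gamma>)) ^ 2)
           \<le> 4 * integral {0..1} (\<lambda>t. norm (vector_derivative \<gamma> (at t)) / bdist \<Omega> (\<gamma> t))"
proof -
  define \<beta> where "\<beta> t = h (\<gamma> t)" for t
  define R where "R t = Re (\<beta> t * cnj (\<beta> t))" for t
  define V where "V t = vector_derivative \<gamma> (at t)" for t
  define B' where "B' t = V t * deriv h (\<gamma> t)" for t
  define Dn where "Dn t = Re (\<beta> t * cnj (B' t) + B' t * cnj (\<beta> t)) / (1 - R t)" for t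
  have gi: "\<gamma> t \<in> \<Omega>" if "t \<in> {0..1}" for t using pim that by (auto simp: path_image_def)
  have R_eq: "R t = norm (\<beta> t) ^ 2" for t unfolding R_def by (rule Re_mult_cnj)
  have R1: "R t < 1" if "t \<in> {0..1}" for t
    using hD[OF gi[OF that]] by (simp add: R_eq \<beta>_def abs_square_less_1)
  have R0: "0 \<le> R t" for t by (simp add: R_eq)
  obtain T where fT: "finite T" and C1: "\<gamma> C1_differentiable_on {0..1} - T"
    and cg: "continuous_on {0..1} \<gamma>"
    using vp unfolding valid_path_def piecewise_C1_differentiable_on_def by blast
  obtain DD where DD: "\<And>t. t \<in> {0..1} - T \<Longrightarrow> (\<gamma> has_vector_derivative DD t) (at t)"
    using C1 unfolding C1_differentiable_on_def by blast
  have deriv_ok: "((\<lambda>t. - ln (1 - R t)) has_vector_derivative Dn t) (at t)"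
    if t: "t \<in> {0<..<1} - T" for t
  proof -
    have t01: "t \<in> {0..1}" "t \<in> {0..1} - T" using t by auto
    have dg: "(\<gamma> has_vector_derivative V t) (at t)"
      using DD[OF t01(2)] V_def vector_derivative_at by metis
    have dh: "(h has_field_derivative deriv h (\<gamma> t)) (at (\<gamma> t))"
      using holh opn gi[OF t01(1)] by (simp add: holomorphic_derivI)
    have db: "(\<beta> has_vector_derivative B' t) (at t)"
      using field_vector_diff_chain_at[OF dg dh] unfolding \<beta>_def B'_def o_def by simp
    have "((\<lambda>t. \<beta> t * cnj (\<beta> t)) has_vector_derivative (\<beta> t * cnj (B' t) + B' t * cnj (\<beta> t))) (at t)"
      by (intro has_vector_derivative_mult has_vector_derivative_cnj db)
    then have "(R has_vector_derivative Re (\<beta> t * cnj (B' t) + B' t * cnj (\<beta> t))) (at t)"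
      unfolding R_def by (rule bounded_linear.has_vector_derivative[OF bounded_linear_Re])
    then have dR: "(R has_real_derivative Re (\<beta> t * cnj (B' t) + B' t * cnj (\<beta> t))) (at t)"
      by (simp add: has_real_derivative_iff_has_vector_derivative)
    have d1: "((\<lambda>t. 1 - R t) has_real_derivative (0 - Re (\<beta> t * cnj (B' t) + B' t * cnj (\<beta> t)))) (at t)"
      by (rule DERIV_diff[OF DERIV_const dR])
    have d2: "((\<lambda>t. ln (1 - R t)) has_real_derivative (inverse (1 - R t) * (0 - Re (\<beta> t * cnj (B' t) + B' t * cnj (\<beta> t))))) (at t)"
      by (rule DERIV_chain2[OF DERIV_ln d1]) (use R1[OF t01(1)] in simp)
    have "((\<lambda>t. - ln (1 - R t)) has_real_derivative - (inverse (1 - R t) * (0 - Re (\<beta> t * cnj (B' t) + B' t * cnj (\<beta> t))))) (at t)"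
      by (rule DERIV_minus[OF d2])
    then have "((\<lambda>t. - ln (1 - R t)) has_real_derivative Dn t) (at t)"
      by (rule DERIV_cong) (simp add: Dn_def divide_inverse mult.commute algebra_simps)
    then show ?thesis by (simp add: has_real_derivative_iff_has_vector_derivative)
  qed
  have contR: "continuous_on {0..1} (\<lambda>t. - ln (1 - R t))"
  proof -
    have "continuous_on {0..1} (h \<circ> \<gamma>)"
      using continuous_on_compose[OF cg] holomorphic_on_imp_continuous_on[OF holh]
      by (metis continuous_on_subset gi image_subset_iff)
    then have "continuous_on {0..1} R" unfolding R_def \<beta>_def o_def by (intro continuous_intros)
    then show ?thesis using R1 by (intro continuous_intros) force+
  qed
  have ftc: "(Dn has_integral ((- ln (1 - R 1)) - (- ln (1 - R 0)))) {0..1}"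
    using fundamental_theorem_of_calculus_interior_strong[OF fT _ deriv_ok contR] by simp
  have gi4: "((\<lambda>t. 4 * (norm (V t) / bdist \<Omega> (\<gamma> t))) has_integral
          4 * integral {0..1} (\<lambda>t. norm (V t) / bdist \<Omega> (\<gamma> t))) {0..1}"
    using intg unfolding V_def by (intro has_integral_mult_right integrable_integral)
  have Dle: "Dn t \<le> 4 * (norm (V t) / bdist \<Omega> (\<gamma> t))" if "t \<in> {0..1}" for t
  proof -
    define dd where "dd = bdist \<Omega> (\<gamma> t)"
    have d0: "0 < dd" and bl: "ball (\<gamma> t) dd \<subseteq> \<Omega>" using bdist_facts[OF opn bnd gi[OF that]] dd_def by auto
    have hb: "norm (deriv h (\<gamma> t)) \<le> 2 * (1 - norm (h (\<gamma> t)) ^ 2) / dd"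
      by (rule schwarz_pick_bound[OF holomorphic_on_subset[OF holh bl] d0]) (use bl hD in auto)
    have nb: "norm (\<beta> t) < 1" using hD[OF gi[OF that]] by (simp add: \<beta>_def)
    have pos: "0 < 1 - R t" using R1[OF that] by simp
    have "Re (\<beta> t * cnj (B' t) + B' t * cnj (\<beta> t)) \<le> 2 * norm (\<beta> t) * norm (B' t)"
      by (rule Re_cross_le)
    also have "\<dots> \<le> 2 * 1 * (norm (V t) * (2 * (1 - R t) / dd))"
    proof (rule mult_mono)
      show "norm (B' t) \<le> norm (V t) * (2 * (1 - R t) / dd)"
        unfolding B'_def norm_mult R_eq \<beta>_def by (rule mult_left_mono[OF hb norm_ge_zero])
      show "2 * norm (\<beta> t) \<le> 2 * 1" using nb by simp
    qed simp_all
    also have "\<dots> = 4 * (norm (V t) / dd) * (1 - R t)" by (simp add: field_simps)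
    finally have "Re (\<beta> t * cnj (B' t) + B' t * cnj (\<beta> t)) \<le> 4 * (norm (V t) / dd) * (1 - R t)" .
    then show ?thesis unfolding Dn_def dd_def[symmetric] using pos by (simp add: divide_le_eq)
  qed
  have "(- ln (1 - R 1)) - (- ln (1 - R 0)) \<le> 4 * integral {0..1} (\<lambda>t. norm (V t) / bdist \<Omega> (\<gamma> t))"
    by (rule has_integral_le[OF ftc gi4 Dle])
  then show ?thesis by (simp add: R_eq \<beta>_def pathfinish_def pathstart_def V_def)
qed

lemma arc_exists:
  assumes holg: "g holomorphic_on ball 0 1" and inj: "inj_on g (ball 0 1)"
    and Om: "\<Omega> = g ` ball 0 1" and bnd: "bounded \<Omega>"
    and a: "a \<in> ball 0 1" and b: "b \<in> ball 0 1" and ab: "a \<noteq> b"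
  shows "\<exists>\<gamma>. valid_path \<gamma> \<and> arc \<gamma> \<and> path_image \<gamma> \<subseteq> \<Omega> \<and>
            pathstart \<gamma> = g a \<and> pathfinish \<gamma> = g b \<and>
            (\<lambda>t. norm (vector_derivative \<gamma> (at t)) / bdist \<Omega> (\<gamma> t)) integrable_on {0..1}"
proof -
  have opn: "open \<Omega>" using Om open_mapping_thm3[OF holg _ inj] by simp
  define lp where "lp = linepath a b"
  have seg: "path_image lp \<subseteq> ball 0 1"
    unfolding lp_def path_image_linepath using a b by (simp add: closed_segment_subset)
  have lt: "lp t \<in> ball 0 1" if "t \<in> {0..1}" for t using seg that unfolding path_image_def by blast
  define \<gamma> where "\<gamma> = g \<circ> lp"
  have vp: "valid_path \<gamma>" unfolding \<gamma>_def lp_def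
    by (rule valid_path_compose_holomorphic[OF valid_path_linepath holg open_ball]) (use seg lp_def in simp)
  have cg: "continuous_on (ball 0 1) g" using holg by (rule holomorphic_on_imp_continuous_on)
  have arc: "arc \<gamma>"
    unfolding arc_def \<gamma>_def
  proof
    show "path (g \<circ> lp)" unfolding path_def
    proof (rule continuous_on_compose)
      show "continuous_on {0..1} lp" unfolding lp_def by (rule continuous_on_linepath)
      show "continuous_on (lp ` {0..1}) g" using seg unfolding path_image_def by (rule continuous_on_subset[OF cg])
    qed
    have "inj_on lp {0..1}" unfolding lp_def using arc_linepath[OF ab] arc_imp_inj_on by blast
    moreover have "inj_on g (lp ` {0..1})" using inj seg by (auto simp: path_image_def intro: inj_on_subset)
    ultimately show "inj_on (g \<circ> lp) {0..1}" by (rule comp_inj_on)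
  qed
  have pim: "path_image \<gamma> \<subseteq> \<Omega>" unfolding \<gamma>_def path_image_compose Om using seg by auto
  have vd: "vector_derivative \<gamma> (at t) = (b - a) * deriv g (lp t)" if "t \<in> {0..1}" for t
  proof -
    have "(lp has_vector_derivative (b - a)) (at t)" unfolding lp_def by (rule has_vector_derivative_linepath_within)
    moreover have "(g has_field_derivative deriv g (lp t)) (at (lp t))"
      using holg lt[OF that] by (simp add: holomorphic_derivI)
    ultimately have "(\<gamma> has_vector_derivative ((b - a) * deriv g (lp t))) (at t)"
      unfolding \<gamma>_def by (rule field_vector_diff_chain_at)
    then show ?thesis by (rule vector_derivative_at)
  qed
  have gi: "\<gamma> t \<in> \<Omega>" if "t \<in> {0..1}" for t using pim that by (auto simp: path_image_def)
  have cdg: "continuous_on (ball 0 1) (deriv g)"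
    by (rule holomorphic_on_imp_continuous_on[OF holomorphic_deriv[OF holg open_ball]])
  have clp: "continuous_on {0..1} lp" unfolding lp_def by (rule continuous_on_linepath)
  have c1: "continuous_on {0..1} (\<lambda>t. deriv g (lp t))"
  proof -
    have "continuous_on {0..1} (deriv g \<circ> lp)"
    proof (rule continuous_on_compose[OF clp])
      show "continuous_on (lp ` {0..1}) (deriv g)"
        by (rule continuous_on_subset[OF cdg]) (use lt in blast)
    qed
    then show ?thesis by (simp add: o_def)
  qed
  have cgam: "continuous_on {0..1} \<gamma>" using arc unfolding arc_def path_def by (rule conjunct1)
  have c2: "continuous_on {0..1} (\<lambda>t. bdist \<Omega> (\<gamma> t))" unfolding bdist_def
    by (rule continuous_on_infdist[OF cgam])
  have c3: "bdist \<Omega> (\<gamma> t) \<noteq> 0" if "t \<in> {0..1}" for t using bdist_facts(1)[OF opn bnd gi[OF that]] by simp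
  have cont: "continuous_on {0..1} (\<lambda>t. norm ((b - a) * deriv g (lp t)) / bdist \<Omega> (\<gamma> t))"
    by (rule continuous_on_divide[OF continuous_on_norm[OF continuous_on_mult[OF continuous_on_const c1]] c2]) (use c3 in blast)
  have "(\<lambda>t. norm (vector_derivative \<gamma> (at t)) / bdist \<Omega> (\<gamma> t)) integrable_on {0..1}"
    by (rule integrable_eq[OF integrable_continuous_interval[OF cont]]) (simp add: vd)
  moreover have "pathstart \<gamma> = g a" "pathfinish \<gamma> = g b" by (simp_all add: \<gamma>_def lp_def pathstart_compose pathfinish_compose)
  ultimately show ?thesis using vp arc pim by blast
qed

lemma growth_to_bound:
  fixes s L d d0 :: real
  assumes s: "0 < s" "s < 1" and L: "0 < L" and d: "0 < d" and d0: "0 < d0"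
    and le: "L / 8 \<le> (d0 / d) powr (1 - s)"
  shows "d \<le> d0 * 8 powr (1 / (1 - s)) * L powr (1 / (s - 1))"
proof -
  define e where "e = 1 / (1 - s)"
  have e0: "0 < e" using s e_def by simp
  have ee: "1 / (s - 1) = - e" unfolding e_def using s by (simp add: field_simps)
  have "(L / 8) powr e \<le> ((d0 / d) powr (1 - s)) powr e"
    using le L e0 by (intro powr_mono2) auto
  also have "\<dots> = d0 / d" using s d d0 by (simp add: powr_powr e_def)
  finally have 1: "(L / 8) powr e \<le> d0 / d" .
  have pos: "0 < (L / 8) powr e" using L by simp
  have "d \<le> d0 / (L / 8) powr e" using 1 pos d by (simp add: field_simps)
  also have "\<dots> = d0 * 8 powr e * L powr (- e)"
    using L by (simp add: powr_divide powr_minus field_simps)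
  finally show ?thesis unfolding ee e_def .
qed

lemma small_bound:
  fixes s L d D M :: real
  assumes s: "0 < s" "s < 1" and L: "0 < L" "L \<le> M" and d: "d \<le> D" and D: "0 \<le> D"
  shows "d \<le> D * M powr (1 / (1 - s)) * L powr (1 / (s - 1))"
proof -
  define e where "e = 1 / (1 - s)"
  have e0: "0 < e" using s e_def by simp
  have ee: "1 / (s - 1) = - e" unfolding e_def using s by (simp add: field_simps)
  have "L powr e \<le> M powr e" using L e0 by (intro powr_mono2) auto
  then have "1 \<le> M powr e * L powr (- e)" using L by (simp add: powr_minus field_simps)
  then have "D \<le> D * (M powr e * L powr (- e))" using D by (metis mult_left_mono mult.right_neutral)
  then show ?thesis unfolding ee using d by (simp add: e_def mult.assoc)
qed

lemma bdist_upper: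
  assumes "open \<Omega>" "bounded \<Omega>" "w \<in> \<Omega>" "\<And>y. y \<in> closure \<Omega> \<Longrightarrow> norm y \<le> B"
  shows "bdist \<Omega> w \<le> 2 * B"
proof -
  have "\<Omega> \<noteq> UNIV" using assms(2) not_bounded_UNIV by blast
  then have ne: "frontier \<Omega> \<noteq> {}" using connected_Int_frontier[of UNIV \<Omega>] assms(3) by auto
  then obtain p where p: "p \<in> frontier \<Omega>" by blast
  have "bdist \<Omega> w \<le> dist w p" unfolding bdist_def by (rule infdist_le[OF p])
  also have "\<dots> \<le> norm w + norm p" by (simp add: dist_norm norm_triangle_ineq4)
  also have "\<dots> \<le> 2 * B"
  proof -
    have "p \<in> closure \<Omega>" using p by (simp add: frontier_def)
    moreover have "w \<in> closure \<Omega>" using assms(3) closure_subset by blast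
    ultimately have "norm p \<le> B" "norm w \<le> B" using assms(4) by auto
    then show ?thesis by simp
  qed
  finally show ?thesis .
qed

theorem mainTheorem4:
  fixes s :: real and \<Omega> :: "complex set" and g :: "complex \<Rightarrow> complex"
  assumes "0 < s" "s < 1"
    and "jordan_domain \<Omega>"
    and "hyperbolic_growth s \<Omega>"
    and "g holomorphic_on ball 0 1" "bij_betw g (ball 0 1) \<Omega>"
  shows "\<exists>C::real. \<forall>x. 1/2 \<le> norm x \<and> norm x < 1 \<longrightarrow>
           bdist \<Omega> (g x) \<le> C * ln (1 / (1 - norm x)) powr (1 / (s - 1)) \<and>
           norm (deriv g x) \<le> C / (1 - norm x) * ln (1 / (1 - norm x)) powr (1 / (s - 1))"
proof -
  note s = assms(1,2)
  have holg: "g holomorphic_on ball 0 1" by fact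
  have inj: "inj_on g (ball 0 1)" and Om: "\<Omega> = g ` ball 0 1"
    using assms(6) unfolding bij_betw_def by auto
  obtain c where c: "simple_path c" "\<Omega> = inside (path_image c)"
    using assms(3) unfolding jordan_domain_def by blast
  have "path c" using c(1) by (rule simple_path_imp_path)
  then have "bounded (path_image c)" by (intro compact_imp_bounded compact_path_image)
  then have bnd: "bounded \<Omega>" unfolding c(2) by (rule bounded_inside)
  have opn: "open \<Omega>" using Om open_mapping_thm3[OF holg _ inj] by simp
  obtain h where holh0: "h holomorphic_on (g ` ball 0 1)" and hg: "\<And>z. z \<in> ball 0 1 \<Longrightarrow> h (g z) = z"
    using holomorphic_has_inverse[OF holg open_ball inj] by blast
  have holh: "h holomorphic_on \<Omega>" using holh0 Om by simp
  have hD: "norm (h u) < 1" if "u \<in> \<Omega>" for u using that Om hg by auto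
  obtain z0 where z0: "z0 \<in> \<Omega>"
    and grow: "\<And>z. z \<in> \<Omega> \<Longrightarrow> qh_dist \<Omega> z0 z \<le> (bdist \<Omega> z0 / bdist \<Omega> z) powr (1 - s)"
    using assms(4) unfolding hyperbolic_growth_def by blast
  define a0 where "a0 = h z0"
  have a0: "a0 \<in> ball 0 1" "g a0 = z0" using z0 Om hg a0_def by auto
  define c0 where "c0 = - ln (1 - norm a0 ^ 2)"
  have a01: "norm a0 ^ 2 < 1" using a0 by (simp add: abs_square_less_1)
  have c00: "0 \<le> c0" unfolding c0_def using a01 by (simp add: ln_le_zero_iff) 
  define K where "K = ln 2 + c0"
  have K0: "0 < K" unfolding K_def using c00 ln_gt_zero[of "2::real"] by linarith
  define d0 where "d0 = bdist \<Omega> z0"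
  have d00: "0 < d0" using bdist_facts(1)[OF opn bnd z0] d0_def by simp
  obtain B where B: "\<And>y. y \<in> closure \<Omega> \<Longrightarrow> norm y \<le> B"
    using bounded_closure[OF bnd] unfolding bounded_iff by blast
  have "z0 \<in> closure \<Omega>" using z0 closure_subset by blast
  then have "norm z0 \<le> B" by (rule B)
  then have B0: "0 \<le> B" using norm_ge_zero[of z0] by linarith
  define Cd where "Cd = max (d0 * 8 powr (1 / (1 - s))) (2 * B * (2 * K) powr (1 / (1 - s)))"
  have "0 \<le> d0 * 8 powr (1 / (1 - s))" using d00 by simp
  then have Cd0: "0 \<le> Cd" unfolding Cd_def by (simp add: le_max_iff_disj)
  have mainA: "bdist \<Omega> (g x) \<le> Cd * ln (1 / (1 - norm x)) powr (1 / (s - 1))"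
    if x: "1/2 \<le> norm x" "norm x < 1" for x
  proof -
    define L where "L = ln (1 / (1 - norm x))"
    have xb: "x \<in> ball 0 1" using x by simp
    have w: "g x \<in> \<Omega>" using Om xb by auto
    define d where "d = bdist \<Omega> (g x)"
    have d0': "0 < d" using bdist_facts(1)[OF opn bnd w] d_def by simp
    have x2: "2 \<le> 1 / (1 - norm x)" using x by (simp add: field_simps)
    have L2: "ln 2 \<le> L" unfolding L_def using x2 x by (subst ln_le_cancel_iff) auto
    have L0: "0 < L" using L2 ln_gt_zero[of 2] by linarith
    have Psi: "L - ln 2 \<le> - ln (1 - norm x ^ 2)"
    proof -
      have p1: "0 < 1 - norm x" using x by simp
      have sq: "0 \<le> (1 - norm x) ^ 2" by simp
      have "1 - norm x ^ 2 \<le> 2 * (1 - norm x)" using sq by (simp add: power2_eq_square algebra_simps)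
      moreover have "0 < 1 - norm x ^ 2" using x by (simp add: abs_square_less_1)
      ultimately have "ln (1 - norm x ^ 2) \<le> ln (2 * (1 - norm x))" by simp
      also have "\<dots> = ln 2 + ln (1 - norm x)" using p1 by (intro ln_mult_pos) auto
      also have "\<dots> = ln 2 - L" unfolding L_def using p1 by (simp add: ln_div)
      finally show ?thesis by simp
    qed
    show ?thesis
    proof (cases "L < 2 * K")
      case True
      have "d \<le> 2 * B" unfolding d_def by (rule bdist_upper[OF opn bnd w B])
      then have "d \<le> 2 * B * (2 * K) powr (1 / (1 - s)) * L powr (1 / (s - 1))"
        using small_bound[OF s L0 _ _ _] True B0 by simp
      also have "\<dots> \<le> Cd * L powr (1 / (s - 1))"
        unfolding Cd_def by (intro mult_right_mono) auto
      finally show ?thesis by (simp add: d_def L_def)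
    next
      case False
      have xa: "x \<noteq> a0"
      proof
        assume "x = a0"
        then have "L - ln 2 \<le> c0" using Psi c0_def by simp
        then show False using False K_def K0 by simp
      qed
      define S where "S = {integral {0..1} (\<lambda>t. norm (vector_derivative \<gamma> (at t)) / bdist \<Omega> (\<gamma> t)) | \<gamma>.
            valid_path \<gamma> \<and> arc \<gamma> \<and> path_image \<gamma> \<subseteq> \<Omega> \<and>
            pathstart \<gamma> = z0 \<and> pathfinish \<gamma> = g x \<and>
            (\<lambda>t. norm (vector_derivative \<gamma> (at t)) / bdist \<Omega> (\<gamma> t)) integrable_on {0..1}}"
      have qS: "qh_dist \<Omega> z0 (g x) = Inf S" unfolding qh_dist_def S_def by (rule refl)
      obtain \<gamma>0 where g0: "valid_path \<gamma>0" "arc \<gamma>0" "path_image \<gamma>0 \<subseteq> \<Omega>"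
            "pathstart \<gamma>0 = g a0" "pathfinish \<gamma>0 = g x"
            "(\<lambda>t. norm (vector_derivative \<gamma>0 (at t)) / bdist \<Omega> (\<gamma>0 t)) integrable_on {0..1}"
        using arc_exists[OF holg inj Om bnd a0(1) xb xa[symmetric]] by blast
      have "integral {0..1} (\<lambda>t. norm (vector_derivative \<gamma>0 (at t)) / bdist \<Omega> (\<gamma>0 t)) \<in> S"
        unfolding S_def mem_Collect_eq using g0 a0(2) by metis
      then have Sne: "S \<noteq> {}" by blast
      have Slb: "(- ln (1 - norm x ^ 2) - c0) / 4 \<le> v" if vS: "v \<in> S" for v
      proof -
        obtain \<gamma> where v: "v = integral {0..1} (\<lambda>t. norm (vector_derivative \<gamma> (at t)) / bdist \<Omega> (\<gamma> t))"
          and vp: "valid_path \<gamma>" "path_image \<gamma> \<subseteq> \<Omega>" "pathstart \<gamma> = z0" "pathfinish \<gamma> = g x"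
          and ig: "(\<lambda>t. norm (vector_derivative \<gamma> (at t)) / bdist \<Omega> (\<gamma> t)) integrable_on {0..1}"
          using vS unfolding S_def by blast
        have "- ln (1 - norm (h (pathfinish \<gamma>)) ^ 2) + ln (1 - norm (h (pathstart \<gamma>)) ^ 2) \<le> 4 * v"
          unfolding v by (rule path_bound[OF holh opn bnd hD vp(1,2) ig])
        then show ?thesis using vp(3,4) hg[OF xb] by (simp add: a0_def[symmetric] c0_def)
      qed
      have "(- ln (1 - norm x ^ 2) - c0) / 4 \<le> Inf S" by (rule cInf_greatest[OF Sne Slb])
      then have "(- ln (1 - norm x ^ 2) - c0) / 4 \<le> (d0 / d) powr (1 - s)"
        using grow[OF w] qS d0_def d_def by simp
      moreover have "L / 8 \<le> (- ln (1 - norm x ^ 2) - c0) / 4" using Psi False K_def by simp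
      ultimately have "L / 8 \<le> (d0 / d) powr (1 - s)" by linarith
      then have "d \<le> d0 * 8 powr (1 / (1 - s)) * L powr (1 / (s - 1))"
        by (rule growth_to_bound[OF s L0 d0' d00])
      also have "\<dots> \<le> Cd * L powr (1 / (s - 1))"
        unfolding Cd_def by (intro mult_right_mono) auto
      finally show ?thesis by (simp add: d_def L_def)
    qed
  qed
  show ?thesis
  proof (intro exI[of _ "48 * Cd"] allI impI conjI)
    fix x :: complex assume x: "1/2 \<le> norm x \<and> norm x < 1"
    define P where "P = ln (1 / (1 - norm x)) powr (1 / (s - 1))"
    have P0: "0 \<le> P" unfolding P_def by simp
    have A: "bdist \<Omega> (g x) \<le> Cd * P" using mainA x P_def by simp
    then show "bdist \<Omega> (g x) \<le> 48 * Cd * ln (1 / (1 - norm x)) powr (1 / (s - 1))"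
      using Cd0 P0 unfolding P_def[symmetric] by (smt (verit) mult_right_mono)
    have x1: "0 < 1 - norm x" using x by simp
    have "norm (deriv g x) \<le> 48 * bdist \<Omega> (g x) / (1 - norm x)"
      using deriv_bound_bdist[OF holg inj Om bnd] x by simp
    also have "\<dots> \<le> 48 * (Cd * P) / (1 - norm x)"
      using A x1 by (intro divide_right_mono) auto
    finally show "norm (deriv g x) \<le> 48 * Cd / (1 - norm x) * ln (1 / (1 - norm x)) powr (1 / (s - 1))"
      unfolding P_def[symmetric] by (simp add: field_simps)
  qed
qed

end
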